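(* Let $m\ge2$. Then $|U_{\beta,m}|\ge\aleph_0$ for every $\beta\in(\mathcal{G}(m),m+1]$.
   Context: For $\beta\in(1,m+1]$ and $x\in I_{\beta,m}=[0,\frac{m}{\beta-1}]$, $\Sigma_{\beta,m}(x)=\{(\epsilon_i)\in\{0,\ldots,m\}^{\mathbb{N}}:\sum_{i\ge1}\epsilon_i\beta^{-i}=x\}$, and $U_{\beta,m}=\{x\in I_{\beta,m}:|\Sigma_{\beta,m}(x)|=1\}$. $\mathcal{G}(m)=k+1$ if $m=2k$ and $\mathcal{G}(m)=\frac{k+1+\sqrt{k^2+6k+5}}{2}$ if $m=2k+1$. *)

theory Defs
  imports "HOL-Analysis.Analysis"
begin

text \<open>Digit sequences are indexed from 0 here: the sequence e corresponds to
  (epsilon_i)_{i>=1} with epsilon_i = e (i - 1). Hence the value is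
  sum_{i>=0} e i * beta^{-(i+1)}.\<close>

definition Ibm :: "real \<Rightarrow> nat \<Rightarrow> real set" where
  "Ibm \<beta> m = {0 .. real m / (\<beta> - 1)}"

definition Sigma_bm :: "real \<Rightarrow> nat \<Rightarrow> real \<Rightarrow> (nat \<Rightarrow> nat) set" where
  "Sigma_bm \<beta> m x = {e. (\<forall>i. e i \<le> m) \<and> (\<lambda>i. real (e i) / \<beta> ^ (Suc i)) sums x}"

definition U_bm :: "real \<Rightarrow> nat \<Rightarrow> real set" where
  "U_bm \<beta> m = {x \<in> Ibm \<beta> m. card (Sigma_bm \<beta> m x) = 1 \<and> finite (Sigma_bm \<beta> m x)}"

definition G :: "nat \<Rightarrow> real" where
  "G m = (if even m then real (m div 2) + 1
          else (let k = real (m div 2) in (k + 1 + sqrt (k^2 + 6*k + 5)) / 2))"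

end

theory Submission
  imports Defs
begin

definition val :: "real \<Rightarrow> (nat \<Rightarrow> nat) \<Rightarrow> nat \<Rightarrow> real" where
  "val \<beta> e k = suminf (\<lambda>i. real (e (k+i)) / \<beta> ^ Suc i)"

lemma geo_sums:
  fixes \<beta> c :: real
  assumes "\<beta> > 1"
  shows "(\<lambda>i. c / \<beta> ^ Suc i) sums (c / (\<beta> - 1))"
proof -
  have "(\<lambda>i. (1/\<beta>) ^ i) sums (1 / (1 - 1/\<beta>))"
    using assms geometric_sums[of "1/\<beta>"] by auto
  then have "(\<lambda>i. (c/\<beta>) * (1/\<beta>) ^ i) sums ((c/\<beta>) * (1 / (1 - 1/\<beta>)))"
    by (rule sums_mult)
  moreover have "(c/\<beta>) * (1 / (1 - 1/\<beta>)) = c / (\<beta> - 1)"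
    using assms by (simp add: field_simps)
  moreover have "(\<lambda>i. (c/\<beta>) * (1/\<beta>) ^ i) = (\<lambda>i. c / \<beta> ^ Suc i)"
    by (simp add: power_divide)
  ultimately show ?thesis by metis
qed

lemma summ:
  assumes "\<beta> > 1" "\<forall>i. e i \<le> m"
  shows "summable (\<lambda>i. real (e (k+i)) / \<beta> ^ Suc i)"
proof (rule summable_comparison_test')
  show "summable (\<lambda>i. real m / \<beta> ^ Suc i)"
    using geo_sums[OF assms(1)] by (rule sums_summable)
  fix n :: nat
  show "norm (real (e (k+n)) / \<beta> ^ Suc n) \<le> real m / \<beta> ^ Suc n"
    using assms by (auto intro!: divide_right_mono)
qed

lemma val_bounds:
  assumes "\<beta> > 1" "\<forall>i. e i \<le> m"
  shows "0 \<le> val \<beta> e k" "val \<beta> e k \<le> real m / (\<beta> - 1)"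
proof -
  show "0 \<le> val \<beta> e k" unfolding val_def
    using assms by (intro suminf_nonneg summ) auto
  have "val \<beta> e k \<le> (\<Sum>i. real m / \<beta> ^ Suc i)" unfolding val_def
    using assms geo_sums[OF assms(1)]
    by (intro suminf_le summ sums_summable) (auto intro!: divide_right_mono)
  also have "\<dots> = real m / (\<beta> - 1)" using geo_sums[OF assms(1)] by (rule sums_unique[symmetric])
  finally show "val \<beta> e k \<le> real m / (\<beta> - 1)" .
qed

lemma val_rec:
  assumes "\<beta> > 1" "\<forall>i. e i \<le> m"
  shows "val \<beta> e k = (real (e k) + val \<beta> e (Suc k)) / \<beta>"
proof -
  have s: "summable (\<lambda>i. real (e (k+i)) / \<beta> ^ Suc i)" by (rule summ[OF assms])
  have "(\<Sum>i. real (e (k + Suc i)) / \<beta> ^ Suc (Suc i)) = val \<beta> e k - real (e k) / \<beta>"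
    using suminf_split_head[OF s] unfolding val_def by simp
  moreover have "(\<Sum>i. real (e (k + Suc i)) / \<beta> ^ Suc (Suc i)) = val \<beta> e (Suc k) / \<beta>"
  proof -
    have "(\<lambda>i. real (e (k + Suc i)) / \<beta> ^ Suc (Suc i)) = (\<lambda>i. (real (e (Suc k + i)) / \<beta> ^ Suc i) / \<beta>)"
      by (auto simp: field_simps)
    then show ?thesis unfolding val_def
      using suminf_divide[OF summ[OF assms, of "Suc k"], of \<beta>] by simp
  qed
  ultimately show ?thesis using assms by (simp add: field_simps)
qed

lemma val_sums:
  assumes "\<beta> > 1" "\<forall>i. e i \<le> m"
  shows "(\<lambda>i. real (e i) / \<beta> ^ Suc i) sums x \<longleftrightarrow> x = val \<beta> e 0"
  using summ[OF assms, of 0] unfolding val_def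
  by (simp add: sums_iff) (metis summable_sums sums_unique)

lemma bounded_sol:
  assumes b: "\<beta> > 1" and dig: "\<forall>i. e i \<le> m"
    and rec: "\<forall>k. W k = (real (e k) + W (Suc k)) / \<beta>"
    and bd: "\<forall>k. \<bar>W k\<bar> \<le> M"
  shows "W k = val \<beta> e k"
proof -
  define D where "D k = val \<beta> e k - W k" for k
  have Drec: "D k = D (Suc k) / \<beta>" for k
    unfolding D_def using val_rec[OF b dig, of k] rec b by (simp add: field_simps)
  have Dn: "D k = D (k + n) / \<beta> ^ n" for n k
  proof (induction n arbitrary: k)
    case 0 then show ?case by simp
  next
    case (Suc n)
    have "D k = D (Suc k) / \<beta>" by (rule Drec)
    also have "\<dots> = D (Suc k + n) / \<beta> ^ n / \<beta>" using Suc.IH[of "Suc k"] by (simp only:)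
    finally show ?case by (simp add: field_simps)
  qed
  define C where "C = M + real m / (\<beta> - 1)"
  have Db: "\<bar>D j\<bar> \<le> C" for j
    unfolding D_def C_def using val_bounds[OF b dig, of j] bd[rule_format, of j] by linarith
  have le: "\<bar>D k\<bar> \<le> C * inverse (\<beta> ^ n)" for n
  proof -
    have "\<bar>D k\<bar> = \<bar>D (k+n)\<bar> / \<beta> ^ n" using Dn[of k n] b by simp
    also have "\<dots> \<le> C / \<beta> ^ n" using Db[of "k+n"] b by (intro divide_right_mono) auto
    finally show ?thesis by (simp add: field_simps)
  qed
  have "(\<lambda>n. C * inverse (\<beta> ^ n)) \<longlonglongrightarrow> C * 0"
    using LIMSEQ_inverse_realpow_zero[OF b] by (intro tendsto_mult tendsto_const)
  then have "\<bar>D k\<bar> \<le> 0"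
    using le by (intro LIMSEQ_le_const) auto
  then show ?thesis unfolding D_def by simp
qed

lemma unique_exp:
  assumes b: "\<beta> > 1" and dig: "\<forall>i. e i \<le> m"
    and c1: "\<forall>n. e n < m \<longrightarrow> val \<beta> e (Suc n) < 1"
    and c2: "\<forall>n. 0 < e n \<longrightarrow> real m / (\<beta> - 1) - 1 < val \<beta> e (Suc n)"
  shows "Sigma_bm \<beta> m (val \<beta> e 0) = {e}"
proof -
  have "e \<in> Sigma_bm \<beta> m (val \<beta> e 0)"
    unfolding Sigma_bm_def using val_sums[OF b dig] dig by auto
  moreover have "d = e" if d: "d \<in> Sigma_bm \<beta> m (val \<beta> e 0)" for d
  proof (rule ccontr)
    assume ne: "d \<noteq> e"
    have ddig: "\<forall>i. d i \<le> m" using d unfolding Sigma_bm_def by auto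
    have "(\<lambda>i. real (d i) / \<beta> ^ Suc i) sums (val \<beta> e 0)"
      using d unfolding Sigma_bm_def by auto
    then have v0: "val \<beta> d 0 = val \<beta> e 0"
      using val_sums[OF b ddig] by simp
    from ne obtain j where "d j \<noteq> e j" by auto
    define n where "n = (LEAST j. d j \<noteq> e j)"
    have dn: "d n \<noteq> e n" unfolding n_def by (rule LeastI) fact
    have before: "k < n \<Longrightarrow> d k = e k" for k
      unfolding n_def using not_less_Least by blast
    have eqk: "k \<le> n \<Longrightarrow> val \<beta> d k = val \<beta> e k" for k
    proof (induction k)
      case 0 show ?case using v0 by simp
    next
      case (Suc k)
      then have "val \<beta> d k = val \<beta> e k" "d k = e k" using before by auto
      then show ?case
        using val_rec[OF b ddig, of k] val_rec[OF b dig, of k] b by (simp add: field_simps)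
    qed
    have key: "real (d n) + val \<beta> d (Suc n) = real (e n) + val \<beta> e (Suc n)"
      using eqk[of n] val_rec[OF b ddig, of n] val_rec[OF b dig, of n] b by (simp add: field_simps)
    have bd: "0 \<le> val \<beta> d (Suc n)" "val \<beta> d (Suc n) \<le> real m / (\<beta> - 1)"
      using val_bounds[OF b ddig] by auto
    show False
    proof (cases "d n > e n")
      case True
      then have "e n < m" using ddig by (metis order.strict_trans2)
      then have "val \<beta> e (Suc n) < 1" using c1 by auto
      moreover have "real (d n) \<ge> real (e n) + 1" using True by simp
      ultimately show False using key bd by linarith
    next
      case False
      then have "e n > d n" using dn by simp
      then have "0 < e n" by simp
      then have "real m / (\<beta> - 1) - 1 < val \<beta> e (Suc n)" using c2 by auto
      moreover have "real (e n) \<ge> real (d n) + 1" using \<open>e n > d n\<close> by simp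
      ultimately show False using key bd by linarith
    qed
  qed
  ultimately show ?thesis by blast
qed

lemma key_ineq:
  fixes m :: nat and \<beta> :: real
  assumes "m \<ge> 2" and "G m < \<beta>"
  shows "\<beta> > 1" "real (m - m div 2) * \<beta> + real (m div 2) + 1 < \<beta>^2"
proof -
  have "\<beta> > 1 \<and> real (m - m div 2) * \<beta> + real (m div 2) + 1 < \<beta>^2"
  proof (cases "even m")
    case True
    then obtain k where k: "m = 2*k" by auto
    with assms have k1: "k \<ge> 1" by simp
    have mk: "m - m div 2 = k" "m div 2 = k" using k by auto
    have "G m = real k + 1" using True k unfolding G_def by simp
    then have bk: "\<beta> > real k + 1" using assms by simp
    then have "(\<beta> + 1) * (\<beta> - real k - 1) > 0" using k1 by (intro mult_pos_pos) auto
    then show ?thesis using mk bk k1 by (simp add: power2_eq_square algebra_simps)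
  next
    case False
    then obtain k where k: "m = 2*k+1" using oddE by blast
    have mk: "m - m div 2 = k + 1" "m div 2 = k" using k by auto
    define s where "s = sqrt (real k ^ 2 + 6 * real k + 5)"
    have s0: "s \<ge> 0" unfolding s_def by simp
    have s2: "s^2 = real k ^ 2 + 6 * real k + 5" unfolding s_def by simp
    have "G m = (real k + 1 + s) / 2" using False k unfolding G_def s_def by (simp add: Let_def)
    then have bs: "2 * \<beta> - (real k + 1) > s" using assms by simp
    have s1: "s \<ge> 1" using s2 s0 unfolding s_def by simp
    have "s^2 < (2 * \<beta> - (real k + 1))^2" using bs s0 by (intro power_strict_mono) auto
    then have "real k ^ 2 + 6 * real k + 5 < (2 * \<beta> - (real k + 1))^2" using s2 by simp
    then have "(real k + 1) * \<beta> + real k + 1 < \<beta>^2"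
      by (simp add: power2_eq_square algebra_simps)
    moreover have "\<beta> > 1" using bs s1 by simp
    ultimately show ?thesis using mk by (simp add: add.commute)
  qed
  then show "\<beta> > 1" "real (m - m div 2) * \<beta> + real (m div 2) + 1 < \<beta>^2" by auto
qed

theorem proposition4p3:
  fixes m :: nat and \<beta> :: real
  assumes "m \<ge> 2" and "G m < \<beta>" and "\<beta> \<le> real m + 1"
  shows "infinite (U_bm \<beta> m)"
proof -
  define a where "a = m - m div 2"
  define b where "b = m div 2"
  have b1: "\<beta> > 1" and kq: "real a * \<beta> + real b + 1 < \<beta>^2"
    using key_ineq[OF assms(1,2)] unfolding a_def b_def by auto
  have ab: "a + b = m" "b \<le> a" "a \<ge> 1" "a \<le> m" "b \<le> m" using assms(1) unfolding a_def b_def by auto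
  define A where "A = (real a * \<beta> + real b) / (\<beta>^2 - 1)"
  define B where "B = (real b * \<beta> + real a) / (\<beta>^2 - 1)"
  have d0: "\<beta>^2 - 1 > 0" using one_less_power[OF b1, of 2] by simp
  have A1: "A < 1" unfolding A_def using d0 kq by (simp add: divide_less_eq)
  have A0: "A > 0" unfolding A_def using d0 ab b1 by (intro divide_pos_pos) (auto intro: add_pos_nonneg)
  have B0: "B \<ge> 0" unfolding B_def using d0 ab b1 by (intro divide_nonneg_pos) auto
  have BA: "B \<le> A"
  proof -
    have "real b * \<beta> + real a \<le> real a * \<beta> + real b"
    proof -
      have "0 \<le> (real a - real b) * (\<beta> - 1)" using ab b1 by (intro mult_nonneg_nonneg) auto
      then show ?thesis by (simp add: algebra_simps)
    qed
    then show ?thesis unfolding A_def B_def using d0 by (intro divide_right_mono) auto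
  qed
  have AB: "A + B = real m / (\<beta> - 1)"
  proof -
    have "A + B = (real a + real b) * (\<beta> + 1) / (\<beta>^2 - 1)"
      unfolding A_def B_def by (simp add: add_divide_distrib[symmetric] algebra_simps)
    also have "\<beta>^2 - 1 = (\<beta> + 1) * (\<beta> - 1)" by (simp add: power2_eq_square algebra_simps)
    finally show ?thesis using ab b1 by (simp add: of_nat_add[symmetric] del: of_nat_add)
  qed
  have Arec: "A * \<beta> = real a + B" and Brec: "B * \<beta> = real b + A"
    unfolding A_def B_def using d0 by (simp_all add: field_simps power2_eq_square)
  define sq :: "nat \<Rightarrow> nat \<Rightarrow> nat" where "sq N i = (if i < N then 0 else if even (i - N) then a else b)" for N i
  define W :: "nat \<Rightarrow> nat \<Rightarrow> real" where "W N k = (if k < N then A / \<beta>^(N - k) else if even (k - N) then A else B)" for N k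
  have sqd: "\<forall>i. sq N i \<le> m" for N unfolding sq_def using ab by auto
  have Wrec: "\<forall>k. W N k = (real (sq N k) + W N (Suc k)) / \<beta>" for N
  proof
    fix k
    show "W N k = (real (sq N k) + W N (Suc k)) / \<beta>"
    proof (cases "k < N")
      case True
      show ?thesis
      proof (cases "Suc k < N")
        case True
        then have "N - k = Suc (N - Suc k)" by simp
        then show ?thesis using True \<open>k < N\<close> unfolding W_def sq_def by simp
      next
        case False
        then have "N = Suc k" using True by simp
        then show ?thesis unfolding W_def sq_def by simp
      qed
    next
      case False
      then have e: "Suc k - N = Suc (k - N)" by simp
      show ?thesis using False b1 Arec Brec unfolding W_def sq_def e
        by (auto simp: field_simps)
    qed
  qed
  have Wb: "\<forall>k. \<bar>W N k\<bar> \<le> A" for N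
  proof
    fix k
    have p1: "1 \<le> \<beta> ^ (N - k)" using b1 by (simp add: one_le_power)
    then have "A * 1 \<le> A * \<beta> ^ (N - k)" using A0 by (intro mult_left_mono) auto
    then have "A / \<beta> ^ (N - k) \<le> A" using p1 by (simp add: divide_le_eq)
    moreover have "0 \<le> A / \<beta> ^ (N - k)" using A0 b1 by simp
    ultimately show "\<bar>W N k\<bar> \<le> A" unfolding W_def using A0 B0 BA by auto
  qed
  have valW: "val \<beta> (sq N) k = W N k" for N k
    using bounded_sol[OF b1 sqd Wrec Wb] by simp
  have inU: "A / \<beta> ^ N \<in> U_bm \<beta> m" for N
  proof -
    have v0: "val \<beta> (sq N) 0 = A / \<beta> ^ N" using valW[of N 0] unfolding W_def by auto
    have c1: "\<forall>n. sq N n < m \<longrightarrow> val \<beta> (sq N) (Suc n) < 1"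
    proof (intro allI impI)
      fix n
      have "\<bar>W N (Suc n)\<bar> \<le> A" using Wb[of N] by blast
      then show "val \<beta> (sq N) (Suc n) < 1" unfolding valW using A1 by linarith
    qed
    have c2: "\<forall>n. 0 < sq N n \<longrightarrow> real m / (\<beta> - 1) - 1 < val \<beta> (sq N) (Suc n)"
    proof (intro allI impI)
      fix n assume "0 < sq N n"
      then have nN: "\<not> n < N" unfolding sq_def by (auto split: if_splits)
      then have "W N (Suc n) = A \<or> W N (Suc n) = B" unfolding W_def by auto
      then show "real m / (\<beta> - 1) - 1 < val \<beta> (sq N) (Suc n)"
        unfolding valW using AB A1 BA by auto
    qed
    have S: "Sigma_bm \<beta> m (A / \<beta> ^ N) = {sq N}"
      using unique_exp[OF b1 sqd c1 c2] v0 by simp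
    have "A / \<beta> ^ N \<in> Ibm \<beta> m"
      using val_bounds[OF b1 sqd, of N 0] v0 unfolding Ibm_def by auto
    then show ?thesis unfolding U_bm_def using S by simp
  qed
  have inj: "inj (\<lambda>N. A / \<beta> ^ N)"
  proof (rule injI)
    fix x y assume "A / \<beta> ^ x = A / \<beta> ^ y"
    then have "\<beta> ^ x = \<beta> ^ y" using A0 b1 by (simp add: field_simps)
    then show "x = y" using b1 by (simp add: power_inject_exp)
  qed
  have "infinite (range (\<lambda>N. A / \<beta> ^ N))"
    using inj by (simp add: finite_image_iff)
  moreover have "range (\<lambda>N. A / \<beta> ^ N) \<subseteq> U_bm \<beta> m" using inU by auto
  ultimately show ?thesis using finite_subset by blast
qed

end
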